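(* Let $\mathcal{U}=\{u_1,\ldots,u_M\}\subset\mathbb{R}\setminus\{0\}$ and $k\ge1$. For $i\in\{1,\ldots,k\}$ let $f_i:\mathbb{R}\to[0,\infty)$ satisfy $f_i(0)\le\sum_{m=1}^Mf_i(u_m)$. Then for integers $0\le w<w'\le k$, $$\sum_{x\in\mathcal{X}_w^k(\mathcal{U})}\prod_{i=1}^kf_i(x_i)\le\big\lceil L^k_{w,w'}\big\rceil\sum_{x'\in\mathcal{X}_{w'}^k(\mathcal{U})}\prod_{i=1}^kf_i(x'_i),\qquad L^k_{w,w'}=\prod_{i=0}^{w'-w-1}\frac{w'-i}{k-w-i}.$$
   Context: $\mathcal{X}_s^k(\mathcal{U})$ is the set of vectors in $\mathbb{R}^k$ with exactly $s$ nonzero entries, each belonging to $\mathcal{U}$. *)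

theory Defs
  imports Complex_Main
begin

text \<open>Vectors in R^k are represented as functions nat => real, with coordinates
  indexed by {1..k} and all other coordinates zero.
  X_s^k(U): vectors with exactly s nonzero entries, each belonging to U.\<close>
definition Xset :: "nat \<Rightarrow> nat \<Rightarrow> real set \<Rightarrow> (nat \<Rightarrow> real) set" where
  "Xset s k U = {x. (\<forall>i. i \<notin> {1..k} \<longrightarrow> x i = 0)
                   \<and> card {i\<in>{1..k}. x i \<noteq> 0} = s
                   \<and> (\<forall>i\<in>{1..k}. x i \<noteq> 0 \<longrightarrow> x i \<in> U)}"

definition Lconst :: "nat \<Rightarrow> nat \<Rightarrow> nat \<Rightarrow> real" where
  "Lconst k w w' = (\<Prod>i=0..<w'-w. real (w' - i) / real (k - w - i))"

end

theory Submission
  imports Defs "HOL-Library.FuncSet"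
begin


definition Eset :: "nat set \<Rightarrow> (nat \<Rightarrow> real set) \<Rightarrow> (nat \<Rightarrow> real) set" where
  "Eset J A = {x. (\<forall>i\<in>J. x i \<in> A i) \<and> (\<forall>i. i \<notin> J \<longrightarrow> x i = 0)}"

lemma Eset_image:
  "Eset J A = (\<lambda>x i. if i \<in> J then x i else 0) ` PiE J A"
proof
  show "Eset J A \<subseteq> (\<lambda>x i. if i \<in> J then x i else 0) ` PiE J A"
  proof
    fix x assume x: "x \<in> Eset J A"
    have "restrict x J \<in> PiE J A" using x by (auto simp: Eset_def)
    moreover have "x = (\<lambda>i. if i \<in> J then restrict x J i else 0)"
      using x by (auto simp: Eset_def)
    ultimately show "x \<in> (\<lambda>x i. if i \<in> J then x i else 0) ` PiE J A" by blast
  qed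
  show "(\<lambda>x i. if i \<in> J then x i else 0) ` PiE J A \<subseteq> Eset J A"
    by (auto simp: Eset_def)
qed

lemma Eset_inj: "inj_on (\<lambda>x i. if i \<in> J then x i else (0::real)) (PiE J A)"
proof (rule inj_onI)
  fix x y assume x: "x \<in> PiE J A" and y: "y \<in> PiE J A"
    and e: "(\<lambda>i. if i \<in> J then x i else 0) = (\<lambda>i. if i \<in> J then y i else 0)"
  show "x = y"
  proof
    fix i show "x i = y i"
    proof (cases "i \<in> J")
      case True 
      have "(if i \<in> J then x i else 0) = (if i \<in> J then y i else 0)" using e by meson
      then show ?thesis using True by simp
    next
      case False then show ?thesis using x y by (metis PiE_arb)
    qed
  qed
qed

lemma Eset_finite:
  assumes "finite J" "\<And>i. i \<in> J \<Longrightarrow> finite (A i)"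
  shows "finite (Eset J A)"
  unfolding Eset_image using assms by (intro finite_imageI finite_PiE) auto

lemma Eset_sum:
  fixes f :: "nat \<Rightarrow> real \<Rightarrow> real"
  assumes "finite J" "\<And>i. i \<in> J \<Longrightarrow> finite (A i)"
  shows "(\<Sum>x\<in>Eset J A. \<Prod>i\<in>J. f i (x i)) = (\<Prod>i\<in>J. \<Sum>v\<in>A i. f i v)"
proof -
  have "(\<Sum>x\<in>Eset J A. \<Prod>i\<in>J. f i (x i))
      = (\<Sum>x\<in>PiE J A. \<Prod>i\<in>J. f i (if i \<in> J then x i else 0))"
    unfolding Eset_image by (subst sum.reindex[OF Eset_inj]) simp
  also have "\<dots> = (\<Sum>x\<in>PiE J A. \<Prod>i\<in>J. f i (x i))"
    by (intro sum.cong refl prod.cong) auto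
  also have "\<dots> = (\<Prod>i\<in>J. \<Sum>v\<in>A i. f i v)"
    by (rule prod_sum_PiE[symmetric]) (use assms in auto)
  finally show ?thesis .
qed


lemma count_super:
  assumes "finite I" "T \<subseteq> I" "card T = w" "w \<le> w'"
  shows "card {T'. T' \<in> {S. S \<subseteq> I \<and> card S = w'} \<and> T \<subseteq> T'} = card (I - T) choose (w' - w)"
proof -
  have fT: "finite T" using assms finite_subset by blast
  have "bij_betw (\<lambda>T'. T' - T) {T'. T' \<in> {S. S \<subseteq> I \<and> card S = w'} \<and> T \<subseteq> T'}
          {B. B \<subseteq> I - T \<and> card B = w' - w}"
  proof (rule bij_betw_byWitness[where f'="\<lambda>B. B \<union> T"])
    show "\<forall>a\<in>{T'. T' \<in> {S. S \<subseteq> I \<and> card S = w'} \<and> T \<subseteq> T'}. a - T \<union> T = a" by blast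
    show "\<forall>a\<in>{B. B \<subseteq> I - T \<and> card B = w' - w}. a \<union> T - T = a" by blast
    show "(\<lambda>T'. T' - T) ` {T'. T' \<in> {S. S \<subseteq> I \<and> card S = w'} \<and> T \<subseteq> T'}
          \<subseteq> {B. B \<subseteq> I - T \<and> card B = w' - w}"
      using assms fT by (auto simp: card_Diff_subset)
    show "(\<lambda>B. B \<union> T) ` {B. B \<subseteq> I - T \<and> card B = w' - w}
          \<subseteq> {T'. T' \<in> {S. S \<subseteq> I \<and> card S = w'} \<and> T \<subseteq> T'}"
    proof (rule image_subsetI)
      fix B assume B: "B \<in> {B. B \<subseteq> I - T \<and> card B = w' - w}"
      have "finite B" using B assms finite_subset by (metis (no_types, lifting) finite_Diff mem_Collect_eq)
      moreover have "B \<inter> T = {}" using B by blast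
      ultimately have "card (B \<union> T) = w'" using B assms fT by (simp add: card_Un_disjoint)
      then show "B \<union> T \<in> {T'. T' \<in> {S. S \<subseteq> I \<and> card S = w'} \<and> T \<subseteq> T'}"
        using B assms by auto
    qed
  qed
  then have "card {T'. T' \<in> {S. S \<subseteq> I \<and> card S = w'} \<and> T \<subseteq> T'}
           = card {B. B \<subseteq> I - T \<and> card B = w' - w}" by (rule bij_betw_same_card)
  also have "\<dots> = card (I - T) choose (w' - w)" using assms by (simp add: n_subsets)
  finally show ?thesis .
qed

lemma count_sub:
  assumes "finite I" "T' \<subseteq> I" "card T' = w'"
  shows "card {T. T \<in> {S. S \<subseteq> I \<and> card S = w} \<and> T \<subseteq> T'} = w' choose w"
proof -
  have "{T. T \<in> {S. S \<subseteq> I \<and> card S = w} \<and> T \<subseteq> T'} = {T. T \<subseteq> T' \<and> card T = w}"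
    using assms by auto
  moreover have "finite T'" using assms finite_subset by blast
  ultimately show ?thesis using assms by (simp add: n_subsets)
qed

lemma Lconst_eq:
  assumes "w \<le> w'" "w' \<le> k"
  shows "Lconst k w w' = real (w' choose w) / real ((k - w) choose (w' - w))"
proof -
  define d where "d = w' - w"
  have "w' choose w = w' choose d" unfolding d_def using assms(1) by (rule binomial_symmetric)
  then have "real (w' choose w) = real (w' choose d)" by simp
  also have "\<dots> = (\<Prod>i=0..<d. real (w' - i) / real (d - i))"
    by (rule binomial_altdef_of_nat) (simp add: d_def)
  finally have n: "real (w' choose w) = (\<Prod>i=0..<d. real (w' - i) / real (d - i))" .
  have dd: "real ((k - w) choose d) = (\<Prod>i=0..<d. real (k - w - i) / real (d - i))"
    by (rule binomial_altdef_of_nat) (use assms in \<open>simp add: d_def\<close>)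
  have "real (w' choose w) / real ((k - w) choose d)
      = (\<Prod>i=0..<d. (real (w' - i) / real (d - i)) / (real (k - w - i) / real (d - i)))"
    unfolding n dd by (rule prod_dividef[symmetric])
  also have "\<dots> = (\<Prod>i=0..<d. real (w' - i) / real (k - w - i))"
  proof (rule prod.cong[OF refl])
    fix i assume "i \<in> {0..<d}"
    then have "real (d - i) \<noteq> 0" by simp
    then show "(real (w' - i) / real (d - i)) / (real (k - w - i) / real (d - i))
             = real (w' - i) / real (k - w - i)" by simp
  qed
  finally show ?thesis unfolding Lconst_def d_def by simp
qed
theorem lemma8:
  fixes U :: "real set" and k w w' :: nat and f :: "nat \<Rightarrow> real \<Rightarrow> real"
  assumes "finite U" and "0 \<notin> U" and "k \<ge> 1"
    and "\<And>i t. i \<in> {1..k} \<Longrightarrow> f i t \<ge> 0"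
    and "\<And>i. i \<in> {1..k} \<Longrightarrow> f i 0 \<le> (\<Sum>u\<in>U. f i u)"
    and "w < w'" and "w' \<le> k"
  shows "(\<Sum>x\<in>Xset w k U. \<Prod>i=1..k. f i (x i))
         \<le> real_of_int \<lceil>Lconst k w w'\<rceil> * (\<Sum>x\<in>Xset w' k U. \<Prod>i=1..k. f i (x i))"
proof -
  define I where "I = {1..k}"
  define h where "h i = (\<Sum>u\<in>U. f i u)" for i
  define F where "F T = (\<Prod>i\<in>I. if i \<in> T then h i else f i 0)" for T
  define Sub where "Sub s = {S. S \<subseteq> I \<and> card S = s}" for s
  define P where "P x = (\<Prod>i=1..k. f i (x i))" for x :: "nat \<Rightarrow> real"
  have fI: "finite I" unfolding I_def by simp
  have fSub: "finite (Sub s)" for s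
    unfolding Sub_def using fI by (rule finite_subset[rotated, OF finite_Pow_iff[THEN iffD2]]) auto
  have A: "sum P (Xset s k U) = sum F (Sub s)" for s
  proof -
    define supp where "supp x = {i\<in>I. x i \<noteq> 0}" for x :: "nat \<Rightarrow> real"
    have "Xset s k U \<subseteq> Eset I (\<lambda>i. insert 0 U)"
      unfolding Xset_def Eset_def I_def by auto
    then have fX: "finite (Xset s k U)"
      using Eset_finite[of I "\<lambda>i. insert 0 U"] fI assms(1) finite_subset by blast
    have im: "supp ` Xset s k U \<subseteq> Sub s"
      unfolding Xset_def Sub_def supp_def I_def by auto
    have fib: "{x. x \<in> Xset s k U \<and> supp x = T} = Eset I (\<lambda>i. if i \<in> T then U else {0})"
      if T: "T \<in> Sub s" for T
    proof (intro set_eqI iffI)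
      fix x assume "x \<in> {x. x \<in> Xset s k U \<and> supp x = T}"
      then show "x \<in> Eset I (\<lambda>i. if i \<in> T then U else {0})"
        unfolding Xset_def Eset_def supp_def I_def by auto
    next
      fix x assume x: "x \<in> Eset I (\<lambda>i. if i \<in> T then U else {0})"
      have TI: "T \<subseteq> I" "card T = s" using T unfolding Sub_def by auto
      have s: "supp x = T"
      proof (intro set_eqI iffI)
        fix i assume "i \<in> supp x" then show "i \<in> T"
          using x unfolding Eset_def supp_def by (auto split: if_splits)
      next
        fix i assume i: "i \<in> T"
        then have "i \<in> I" using TI by blast
        then have "x i \<in> U" using x i unfolding Eset_def by auto
        then have "x i \<noteq> 0" using assms(2) by auto
        then show "i \<in> supp x" using \<open>i \<in> I\<close> unfolding supp_def by auto
      qed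
      show "x \<in> {x. x \<in> Xset s k U \<and> supp x = T}"
        using x s TI unfolding Xset_def Eset_def supp_def I_def by (auto split: if_splits)
    qed
    have "sum P (Xset s k U) = (\<Sum>T\<in>Sub s. sum P {x. x \<in> Xset s k U \<and> supp x = T})"
      by (rule sum.group[OF fX fSub im, symmetric])
    also have "\<dots> = (\<Sum>T\<in>Sub s. F T)"
    proof (rule sum.cong[OF refl])
      fix T assume T: "T \<in> Sub s"
      have "sum P {x. x \<in> Xset s k U \<and> supp x = T}
          = (\<Sum>x\<in>Eset I (\<lambda>i. if i \<in> T then U else {0}). \<Prod>i\<in>I. f i (x i))"
        unfolding fib[OF T] P_def I_def ..
      also have "\<dots> = (\<Prod>i\<in>I. \<Sum>v\<in>(if i \<in> T then U else {0}). f i v)"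
        by (rule Eset_sum) (use fI assms(1) in auto)
      also have "\<dots> = F T" unfolding F_def h_def by (intro prod.cong refl) auto
      finally show "sum P {x. x \<in> Xset s k U \<and> supp x = T} = F T" .
    qed
    finally show ?thesis .
  qed
  have Fnn: "F T \<ge> 0" for T
    unfolding F_def h_def I_def using assms(4) by (auto intro!: prod_nonneg sum_nonneg)
  have Fmono: "F T \<le> F T'" if "T \<subseteq> T'" for T T'
    unfolding F_def
  proof (rule prod_mono)
    fix i assume i: "i \<in> I"
    have g0: "0 \<le> f i 0" and gh: "f i 0 \<le> h i" and h0: "0 \<le> h i"
      using assms(4,5) i unfolding I_def h_def by (auto intro: sum_nonneg)
    show "0 \<le> (if i \<in> T then h i else f i 0) \<and>
          (if i \<in> T then h i else f i 0) \<le> (if i \<in> T' then h i else f i 0)"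
      using that g0 gh h0 by auto
  qed
  let ?d = "w' - w"
  have cI: "card I = k" unfolding I_def by simp
  have B: "real ((k - w) choose ?d) * sum F (Sub w) \<le> real (w' choose w) * sum F (Sub w')"
  proof -
    have "real ((k - w) choose ?d) * sum F (Sub w)
        = (\<Sum>T\<in>Sub w. \<Sum>T'\<in>{T'. T' \<in> Sub w' \<and> T \<subseteq> T'}. F T)"
    proof -
      have "card {T'. T' \<in> Sub w' \<and> T \<subseteq> T'} = (k - w) choose ?d" if "T \<in> Sub w" for T
      proof -
        have TT: "T \<subseteq> I" "card T = w" using that unfolding Sub_def by auto
        then have "finite T" using fI finite_subset by blast
        then have "card (I - T) = k - w" using TT cI by (simp add: card_Diff_subset)
        then show ?thesis using count_super[OF fI, of T w w'] that assms(6)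
          unfolding Sub_def by simp
      qed
      then show ?thesis by (simp add: sum_distrib_left)
    qed
    also have "\<dots> \<le> (\<Sum>T\<in>Sub w. \<Sum>T'\<in>{T'. T' \<in> Sub w' \<and> T \<subseteq> T'}. F T')"
      by (intro sum_mono Fmono) auto
    also have "\<dots> = (\<Sum>T'\<in>Sub w'. \<Sum>T\<in>{T. T \<in> Sub w \<and> T \<subseteq> T'}. F T')"
      by (rule sum.swap_restrict[OF fSub fSub])
    also have "\<dots> = real (w' choose w) * sum F (Sub w')"
    proof -
      have "card {T. T \<in> Sub w \<and> T \<subseteq> T'} = w' choose w" if "T' \<in> Sub w'" for T'
        using count_sub[OF fI, of T' w' w] that unfolding Sub_def by simp
      then show ?thesis by (simp add: sum_distrib_left)
    qed
    finally show ?thesis .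
  qed
  have pos: "real ((k - w) choose ?d) > 0" using assms(6,7) by simp
  have S0: "sum F (Sub w') \<ge> 0" using Fnn by (simp add: sum_nonneg)
  have "sum F (Sub w) \<le> Lconst k w w' * sum F (Sub w')"
    using B pos unfolding Lconst_eq[OF less_imp_le[OF assms(6)] assms(7)]
    by (simp add: field_simps)
  also have "\<dots> \<le> real_of_int \<lceil>Lconst k w w'\<rceil> * sum F (Sub w')"
    by (rule mult_right_mono[OF le_of_int_ceiling S0])
  finally show ?thesis using A unfolding P_def by simp
qed

end
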